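(* For every $F$-linear subspace $V$ of $M_n$ there exists a quasi-polynomial $P\in\mathcal C\langle X\rangle$ such that $\mathrm{im}(P)=V$, where for $P$ involving only $x_1,\dots,x_m$ (and coordinates $x^{(k)}_{ij}$, $k\le m$), $\mathrm{im}(P)=\{P(A_1,\dots,A_m): A_1,\dots,A_m\in M_n\}$.
   Context: Let $F$ be a field of characteristic $0$, $n\ge1$, $M_n=M_n(F)$. Let $\mathcal C=F[x^{(k)}_{ij}:1\le i,j\le n,\ k=1,2,\dots]$ and $X=\{x_1,x_2,\dots\}$ noncommuting indeterminates; quasi-polynomials are elements of the free $\mathcal C$-algebra $\mathcal C\langle X\rangle$. The evaluation $P(A_1,\dots,A_m)$ at $A_k=(a^{(k)}_{ij})\in M_n$ is obtained by substituting $A_k$ for $x_k$ and $a^{(k)}_{ij}$ for $x^{(k)}_{ij}$. *)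

theory Defs
  imports "HOL-Analysis.Analysis"
begin

text \<open>Quasi-polynomials: elements of the free algebra C<X> over
  C = F[x^(k)_ij], represented by expression trees (every element of the
  free C-algebra is denoted by such an expression, and evaluation is a
  homomorphism, so images coincide).  Matrices are of type 'a^'n^'n,
  i.e. n = CARD('n) >= 1.  Variables x_1, x_2, ... are indexed from 0.\<close>

datatype ('a, 'n) qpoly =
    QVar nat
  | QCoord nat 'n 'n      \<comment> \<open>commuting indeterminate x^(k)_ij in C\<close>
  | QConst 'a
  | QAdd "('a, 'n) qpoly" "('a, 'n) qpoly"
  | QMul "('a, 'n) qpoly" "('a, 'n) qpoly"

definition scal_mat :: "'a::semiring_1 \<Rightarrow> 'a^'n^'n" where
  "scal_mat c = (\<chi> i j. if i = j then c else 0)"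

primrec qeval :: "(nat \<Rightarrow> 'a::semiring_1^'n^'n) \<Rightarrow> ('a, 'n::finite) qpoly \<Rightarrow> 'a^'n^'n" where
  "qeval A (QVar k) = A k"
| "qeval A (QCoord k i j) = scal_mat ((A k) $ i $ j)"
| "qeval A (QConst c) = scal_mat c"
| "qeval A (QAdd p q) = qeval A p + qeval A q"
| "qeval A (QMul p q) = qeval A p ** qeval A q"

text \<open>Since P involves only finitely many variables and its value depends only on
  those, ranging over all sequences of matrices gives the same set as
  ranging over (A_1,...,A_m).\<close>
definition qimage :: "('a::semiring_1, 'n::finite) qpoly \<Rightarrow> ('a^'n^'n) set" where
  "qimage P = {qeval A P | A. True}"

definition mat_subspace :: "('a::field^'n^'n) set \<Rightarrow> bool" where
  "mat_subspace V \<longleftrightarrow> 0 \<in> V \<and> (\<forall>X\<in>V. \<forall>Y\<in>V. X + Y \<in> V)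
     \<and> (\<forall>c. \<forall>X\<in>V. (\<chi> i j. c * X $ i $ j) \<in> V)"

end

theory Submission
  imports Defs
begin

definition smul :: "'a::field \<Rightarrow> 'a^'n^'n \<Rightarrow> 'a^'n^'n" where
  "smul c M = (\<chi> i j. c * M $ i $ j)"

lemma smul_nth[simp]: "smul c M $ i $ j = c * M $ i $ j"
  by (simp add: smul_def)

interpretation mat: vector_space "smul :: 'a::field \<Rightarrow> 'a^'n^'n \<Rightarrow> 'a^'n^'n"
  by unfold_locales (simp_all add: vec_eq_iff algebra_simps)

lemma scal_mat_nth[simp]: "scal_mat c $ i $ j = (if i = j then c else 0)"
  by (simp add: scal_mat_def)

lemma scal_mat_add: "(scal_mat (a + b) :: 'a::semiring_1^'n^'n) = scal_mat a + scal_mat b"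
  by (simp add: vec_eq_iff)

lemma if_mult_zero: "(if P then c else 0) * (x::'a::semiring_0) = (if P then c * x else 0)"
  by simp

lemma scal_mat_mult_left: "(scal_mat c :: 'a::comm_ring_1^'n^'n) ** M = (\<chi> i j. c * M $ i $ j)"
  by (simp add: vec_eq_iff matrix_matrix_mult_def scal_mat_def if_mult_zero)

lemma scal_mat_mult: "(scal_mat a :: 'a::comm_ring_1^'n^'n) ** scal_mat b = scal_mat (a * b)"
  by (simp add: scal_mat_mult_left vec_eq_iff)

lemma scal_mat_sum: "scal_mat (sum f S) = (\<Sum>x\<in>S. scal_mat (f x) :: 'a::semiring_1^'n^'n)"
  by (induction S rule: infinite_finite_induct) (auto simp: scal_mat_add vec_eq_iff scal_mat_def)

primrec ren :: "(nat \<Rightarrow> nat) \<Rightarrow> ('a, 'n) qpoly \<Rightarrow> ('a, 'n) qpoly" where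
  "ren g (QVar k) = QVar (g k)"
| "ren g (QCoord k i j) = QCoord (g k) i j"
| "ren g (QConst c) = QConst c"
| "ren g (QAdd p q) = QAdd (ren g p) (ren g q)"
| "ren g (QMul p q) = QMul (ren g p) (ren g q)"

lemma qeval_ren[simp]: "qeval A (ren g P) = qeval (A \<circ> g) P"
  by (induction P) auto

definition qsum :: "('a::zero, 'n) qpoly list \<Rightarrow> ('a, 'n) qpoly" where
  "qsum xs = foldr QAdd xs (QConst 0)"

lemma qeval_qsum: "qeval A (qsum (map f xs)) = (\<Sum>x\<leftarrow>xs. qeval A (f x))"
  by (induction xs) (auto simp: qsum_def scal_mat_def vec_eq_iff)

definition elist :: "'n::finite list" where
  "elist = (SOME xs. set xs = UNIV \<and> distinct xs)"

lemma elist: "set (elist :: 'n::finite list) = UNIV \<and> distinct (elist :: 'n list)"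
  unfolding elist_def by (rule someI_ex) (use finite_distinct_list[of "UNIV :: 'n set"] in auto)

lemma sum_elist: "(\<Sum>x\<leftarrow>(elist::'n::finite list). f x) = (\<Sum>x\<in>UNIV. f x)"
  using elist by (metis sum_list_distinct_conv_sum_set)

primrec qentry :: "('a::zero, 'n::finite) qpoly \<Rightarrow> 'n \<Rightarrow> 'n \<Rightarrow> ('a, 'n) qpoly" where
  "qentry (QVar k) i j = QCoord k i j"
| "qentry (QCoord k a b) i j = (if i = j then QCoord k a b else QConst 0)"
| "qentry (QConst c) i j = (if i = j then QConst c else QConst 0)"
| "qentry (QAdd p q) i j = QAdd (qentry p i j) (qentry q i j)"
| "qentry (QMul p q) i j = qsum (map (\<lambda>r. QMul (qentry p i r) (qentry q r j)) elist)"

lemma qeval_qentry: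
  "qeval A (qentry P i j) = scal_mat (qeval A P $ i $ j :: 'a::comm_ring_1)"
proof (induction P arbitrary: i j)
  case (QMul p q)
  have "qeval A (qentry (QMul p q) i j) = (\<Sum>r\<in>UNIV. scal_mat (qeval A p $i$r * qeval A q $r$j))"
    by (simp add: qeval_qsum sum_elist QMul scal_mat_mult)
  also have "\<dots> = scal_mat (\<Sum>r\<in>UNIV. qeval A p $i$r * qeval A q $r$j)"
    by (simp add: scal_mat_sum)
  finally show ?case by (simp add: matrix_matrix_mult_def)
qed (auto simp: scal_mat_add vec_eq_iff scal_mat_def)

definition lam :: "'a::comm_ring_1^'n^'n \<Rightarrow> 'a^'n^'n \<Rightarrow> 'a" where
  "lam C M = (\<Sum>i\<in>UNIV. \<Sum>j\<in>UNIV. C $ i $ j * M $ i $ j)"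

definition qlam :: "'a::comm_ring_1^'n^'n \<Rightarrow> ('a, 'n::finite) qpoly \<Rightarrow> ('a, 'n) qpoly" where
  "qlam C P = qsum (map (\<lambda>i. qsum (map (\<lambda>j. QMul (QConst (C$i$j)) (qentry P i j)) elist)) elist)"

lemma qeval_qlam: "qeval A (qlam C P) = scal_mat (lam C (qeval A P))"
  by (simp add: qlam_def lam_def qeval_qsum sum_elist qeval_qentry scal_mat_mult scal_mat_sum)

lemma lam_smul: "lam C (smul c M) = c * lam C M"
  by (simp add: lam_def sum_distrib_left algebra_simps)

lemma lam_diff: "lam C (M - N) = lam C M - lam C N"
  by (simp add: lam_def algebra_simps sum_subtractf)

lemma lam_add: "lam C (M + N) = lam C M + lam C N"
  by (simp add: lam_def algebra_simps sum.distrib)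

lemma lam_Cdiff: "lam (C - D) M = lam C M - lam D M"
  by (simp add: lam_def algebra_simps sum_subtractf)

lemma lam_Csmul: "lam (smul c C) M = c * lam C M"
  by (simp add: lam_def sum_distrib_left algebra_simps)

definition unitC :: "'n \<Rightarrow> 'n \<Rightarrow> 'a::comm_ring_1^'n^'n" where
  "unitC r s = (\<chi> a b. if a = r \<and> b = s then 1 else 0)"

lemma lam_unitC: "lam (unitC r s) M = M $ r $ s"
proof -
  have "lam (unitC r s) M = (\<Sum>i\<in>UNIV. if i = r then M $ r $ s else 0)"
    unfolding lam_def unitC_def by (intro sum.cong refl) (auto simp: if_mult_zero)
  then show ?thesis by simp
qed

lemma smul_as_mult: "smul c M = (scal_mat c :: 'a::field^'n^'n) ** M"
  by (simp add: scal_mat_mult_left smul_def)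

definition ev2 :: "nat \<Rightarrow> nat" where "ev2 k = 2 * k"
definition od2 :: "nat \<Rightarrow> nat" where "od2 k = 2 * k + 1"
definition merge :: "(nat \<Rightarrow> 'b) \<Rightarrow> (nat \<Rightarrow> 'b) \<Rightarrow> nat \<Rightarrow> 'b" where
  "merge A B k = (if even k then A (k div 2) else B (k div 2))"

lemma merge_ev[simp]: "merge A B \<circ> ev2 = A"
  by (simp add: fun_eq_iff merge_def ev2_def)
lemma merge_od[simp]: "merge A B \<circ> od2 = B"
  by (simp add: fun_eq_iff merge_def od2_def)

definition step :: "'a::field^'n^'n \<Rightarrow> ('a, 'n::finite) qpoly \<Rightarrow> ('a, 'n) qpoly" where
  "step C P = QAdd (QMul (qlam C (ren od2 P)) (ren ev2 P))
     (QMul (QConst (-1)) (QMul (qlam C (ren ev2 P)) (ren od2 P)))"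

lemma qeval_step: "qeval A (step C P) =
  smul (lam C (qeval (A \<circ> od2) P)) (qeval (A \<circ> ev2) P)
  - smul (lam C (qeval (A \<circ> ev2) P)) (qeval (A \<circ> od2) P)"
  by (simp add: step_def qeval_qlam scal_mat_mult_left smul_def vec_eq_iff)

definition Wcs :: "('a::field^'n^'n) list \<Rightarrow> ('a^'n^'n) set" where
  "Wcs cs = {M. \<forall>C\<in>set cs. lam C M = 0}"

fun kill :: "('a::field^'n^'n) list \<Rightarrow> ('a, 'n::finite) qpoly" where
  "kill [] = QVar 0"
| "kill (C # cs) = (if \<forall>M\<in>Wcs cs. lam C M = 0 then kill cs else step C (kill cs))"

lemma qimage_kill: "qimage (kill cs) = Wcs cs"
proof (induction cs)
  case Nil
  have "\<exists>A. M = A 0" for M :: "'a^'b^'b" by (rule exI[of _ "\<lambda>_. M"]) simp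
  then show ?case by (auto simp: qimage_def Wcs_def)
next
  case (Cons C cs)
  show ?case
  proof (cases "\<forall>M\<in>Wcs cs. lam C M = 0")
    case True
    then have "Wcs (C # cs) = Wcs cs" by (auto simp: Wcs_def)
    then show ?thesis using True Cons by simp
  next
    case False
    then obtain N0 where N0: "N0 \<in> Wcs cs" "lam C N0 \<noteq> 0" by blast
    define N where "N = smul (1 / lam C N0) N0"
    have KS: "kill (C # cs) = step C (kill cs)" using False by (simp only: kill.simps if_False)
    have NW: "N \<in> Wcs cs" using N0 by (auto simp: Wcs_def N_def lam_smul)
    have N1: "lam C N = 1" using N0 by (simp add: N_def lam_smul)
    have inW: "qeval A (kill cs) \<in> Wcs cs" for A
      using Cons by (auto simp: qimage_def)
    show ?thesis
    proof
      show "qimage (kill (C # cs)) \<subseteq> Wcs (C # cs)"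
      proof
        fix M assume "M \<in> qimage (kill (C # cs))"
        then obtain A where M: "M = qeval A (step C (kill cs))"
          using KS by (auto simp: qimage_def)
        define X where "X = qeval (A \<circ> ev2) (kill cs)"
        define Y where "Y = qeval (A \<circ> od2) (kill cs)"
        have X: "X \<in> Wcs cs" and Y: "Y \<in> Wcs cs" using inW X_def Y_def by auto
        have M2: "M = smul (lam C Y) X - smul (lam C X) Y"
          using M by (simp add: qeval_step X_def Y_def)
        show "M \<in> Wcs (C # cs)"
          using X Y unfolding M2 Wcs_def by (auto simp: lam_diff lam_smul)
      qed
    next
      show "Wcs (C # cs) \<subseteq> qimage (kill (C # cs))"
      proof
        fix M assume MW: "M \<in> Wcs (C # cs)"
        then have "M \<in> qimage (kill cs)" using Cons by (auto simp: Wcs_def)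
        then obtain A where A: "M = qeval A (kill cs)" by (auto simp: qimage_def)
        from NW Cons obtain B where B: "N = qeval B (kill cs)" by (auto simp: qimage_def)
        have "lam C M = 0" using MW by (auto simp: Wcs_def)
        then have "qeval (merge A B) (kill (C # cs)) = M"
          unfolding KS by (simp add: qeval_step A[symmetric] B[symmetric] N1 vec_eq_iff)
        then show "M \<in> qimage (kill (C # cs))" unfolding qimage_def by blast
      qed
    qed
  qed
qed

definition lcs :: "'a::field^'n^'n \<Rightarrow> 'n::finite \<Rightarrow> 'n \<Rightarrow> ('a^'n^'n) list" where
  "lcs m p q = map (\<lambda>(r,s). smul (m$p$q) (unitC r s) - smul (m$r$s) (unitC p q))
     (List.product elist elist)"

lemma Wcs_lcs:
  assumes "m $ p $ q \<noteq> 0"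
  shows "Wcs (lcs m p q) = range (\<lambda>c. smul c m)"
proof -
  have W: "Wcs (lcs m p q) = {M. \<forall>r s. m$p$q * M$r$s - m$r$s * M$p$q = 0}"
    by (auto simp: Wcs_def lcs_def lam_Cdiff lam_Csmul lam_unitC elist)
  show ?thesis
  proof (unfold W, intro equalityI subsetI)
    fix M assume "M \<in> {M. \<forall>r s. m$p$q * M$r$s - m$r$s * M$p$q = 0}"
    then have h: "\<And>r s. m$p$q * M$r$s = m$r$s * M$p$q" by auto
    have "M = smul (M$p$q / m$p$q) m"
      unfolding vec_eq_iff using assms h by (auto simp: field_simps)
    then show "M \<in> range (\<lambda>c. smul c m)" by blast
  qed (auto simp: algebra_simps)
qed

definition line :: "'a::field^'n^'n \<Rightarrow> ('a, 'n::finite) qpoly" where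
  "line m = (if m = 0 then QConst 0 else
     kill (lcs m (fst (SOME pq. m $ fst pq $ snd pq \<noteq> 0)) (snd (SOME pq. m $ fst pq $ snd pq \<noteq> 0))))"

lemma qimage_line: "qimage (line m) = range (\<lambda>c. smul c m)"
proof (cases "m = 0")
  case True
  then show ?thesis
    by (auto simp: line_def qimage_def scal_mat_def vec_eq_iff)
next
  case False
  then obtain p q where "m $ p $ q \<noteq> 0" by (auto simp: vec_eq_iff)
  then have "\<exists>pq. m $ fst pq $ snd pq \<noteq> 0" by auto
  then have "m $ fst (SOME pq. m $ fst pq $ snd pq \<noteq> 0) $ snd (SOME pq. m $ fst pq $ snd pq \<noteq> 0) \<noteq> 0"
    by (rule someI_ex)
  then show ?thesis using False by (simp add: line_def qimage_kill Wcs_lcs)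
qed

fun psum :: "('a::field^'n^'n) list \<Rightarrow> ('a, 'n::finite) qpoly" where
  "psum [] = QConst 0"
| "psum (m # ms) = QAdd (ren ev2 (line m)) (ren od2 (psum ms))"

lemma qimage_psum: "qimage (psum ms) = mat.span (set ms)"
proof (induction ms)
  case Nil
  then show ?case by (auto simp: qimage_def scal_mat_def vec_eq_iff)
next
  case (Cons m ms)
  show ?case
  proof (intro equalityI subsetI)
    fix x assume "x \<in> qimage (psum (m # ms))"
    then obtain A where x: "x = qeval (A \<circ> ev2) (line m) + qeval (A \<circ> od2) (psum ms)"
      by (auto simp: qimage_def)
    have "qeval (A \<circ> ev2) (line m) \<in> qimage (line m)" by (auto simp: qimage_def)
    then obtain c where c: "qeval (A \<circ> ev2) (line m) = smul c m" by (auto simp: qimage_line)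
    have "qeval (A \<circ> od2) (psum ms) \<in> mat.span (set ms)"
      using Cons by (auto simp: qimage_def)
    then show "x \<in> mat.span (set (m # ms))"
      unfolding mat.span_insert set_simps x c by (intro CollectI exI[of _ c]) simp
  next
    fix x assume "x \<in> mat.span (set (m # ms))"
    then obtain k where k: "x - smul k m \<in> mat.span (set ms)"
      unfolding set_simps mat.span_insert by blast
    then obtain B where B: "x - smul k m = qeval B (psum ms)"
      using Cons by (auto simp: qimage_def)
    have "smul k m \<in> qimage (line m)" unfolding qimage_line by blast
    then obtain A where A: "smul k m = qeval A (line m)" by (auto simp: qimage_def)
    have "qeval (merge A B) (psum (m # ms)) = x"
      by (simp add: A[symmetric] B[symmetric])
    then show "x \<in> qimage (psum (m # ms))" unfolding qimage_def by blast
  qed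
qed

lemma units_span: "(UNIV :: ('a::field^'n::finite^'n) set) \<subseteq> mat.span (range (\<lambda>(r,s). unitC r s))"
proof
  fix M :: "'a^'n^'n"
  have "M = (\<Sum>rs\<in>UNIV. smul (M $ fst rs $ snd rs) (unitC (fst rs) (snd rs)))"
  proof -
    have "(\<Sum>rs\<in>UNIV. smul (M $ fst rs $ snd rs) (unitC (fst rs) (snd rs))) $ i $ j = M $ i $ j" for i j
    proof -
      have "(\<Sum>rs\<in>UNIV. smul (M $ fst rs $ snd rs) (unitC (fst rs) (snd rs))) $ i $ j
          = (\<Sum>rs\<in>UNIV. if rs = (i,j) then M $ i $ j else 0)"
        unfolding sum_component by (intro sum.cong refl) (auto simp: unitC_def)
      then show ?thesis by simp
    qed
    then show ?thesis by (simp add: vec_eq_iff)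
  qed
  moreover have "(\<Sum>rs\<in>UNIV. smul (M $ fst rs $ snd rs) (unitC (fst rs) (snd rs))) \<in> mat.span (range (\<lambda>(r,s). unitC r s))"
    by (intro mat.span_sum mat.span_scale mat.span_base) (auto simp: case_prod_beta)
  ultimately show "M \<in> mat.span (range (\<lambda>(r,s). unitC r s))" by simp
qed

theorem mainTheorem3:
  fixes V :: "('a::field_char_0 ^ 'n ^ 'n) set"
  assumes "mat_subspace V"
  shows "\<exists>P :: ('a, 'n) qpoly. qimage P = V"
proof -
  have sub: "mat.subspace V"
    using assms unfolding mat_subspace_def mat.subspace_def smul_def by blast
  obtain B where B: "B \<subseteq> V" "mat.independent B" "V \<subseteq> mat.span B"
    using mat.basis_exists by blast
  have "finite B"
    using mat.independent_span_bound[OF _ B(2), of "range (\<lambda>(r,s). unitC r s)"] units_span by auto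
  then obtain ms where ms: "set ms = B" using finite_list by blast
  have "mat.span B = V"
    using B sub by (metis mat.span_subspace)
  then have "qimage (psum ms) = V" using ms by (simp add: qimage_psum)
  then show ?thesis by blast
qed

end
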